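(* Let $d\ge 2$ be even and fix a base $\theta>1$. Let $(u_j)_{j\ge 1}$ be a real sequence and let ${\bm v}\in\mathbb{R}^d$ with $\|{\bm v}\|_2=1$. For each $n\ge 1$ let $\boldsymbol{X}_n=\boldsymbol{u}_n{\bm v}^\top\in\mathbb{R}^{n\times d}$ with $\boldsymbol{u}_n=(u_1,\dots,u_n)^\top$. Assume: (i) there exist constants $0<c\le C<\infty$ with $c\le |u_j|\le C$ for all $j$; (ii) $\sum_{j=1}^{n-1}|u_{j+1}^2-u_j^2| = o(n)$ as $n\to\infty$; (iii) $e^{2i\theta_k}\neq 1$ for all $1\le k\le d/2$, and $e^{i(\theta_k+\theta_l)}\neq 1$, $e^{i(\theta_k-\theta_l)}\neq 1$ for all $k\neq l$. Then $$\lim_{n\to\infty}\frac{\mathrm{srank}(\mathcal{R}(\boldsymbol{X}_n))}{\mathrm{srank}(\boldsymbol{X}_n)}=\frac{2}{\max_{1\le k\le d/2}\alpha_k^2}\in[2,d],$$ where $\alpha_k:=\sqrt{v_{2k-1}^2+v_{2k}^2}$.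
   Context: RoPE action: for $\boldsymbol{X}=[\boldsymbol{x}_1,\dots,\boldsymbol{x}_n]^\top\in\mathbb{R}^{n\times d}$ ($d$ even), $\mathcal{R}(\boldsymbol{X}):=[\boldsymbol{R}_1\boldsymbol{x}_1,\dots,\boldsymbol{R}_n\boldsymbol{x}_n]^\top$, where $\boldsymbol{R}_j=\mathrm{Diag}(\boldsymbol{R}_{j,\theta_1},\dots,\boldsymbol{R}_{j,\theta_{d/2}})\in\mathbb{R}^{d\times d}$ is block diagonal with $2\times2$ blocks $\boldsymbol{R}_{j,\theta_k}=\begin{bmatrix}\cos(j\theta_k)&-\sin(j\theta_k)\\ \sin(j\theta_k)&\cos(j\theta_k)\end{bmatrix}$ and frequencies $\theta_k=\theta^{-2(k-1)/d}$, $1\le k\le d/2$, for a base $\theta>1$. The stable rank of a nonzero matrix $\boldsymbol{X}$ is $\mathrm{srank}(\boldsymbol{X}):=\|\boldsymbol{X}\|_F^2/\|\boldsymbol{X}\|_2^2$, where $\|\cdot\|_F$ is the Frobenius norm and $\|\cdot\|_2$ the spectral norm. *)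

theory Defs
  imports "HOL-Analysis.Analysis" "HOL-Library.Landau_Symbols"
begin

text \<open>Matrices of size n x d are represented as functions nat => nat => real,
  using only the entries with row index i < n and column index j < d (0-indexed).\<close>

definition frob_norm :: "nat \<Rightarrow> nat \<Rightarrow> (nat \<Rightarrow> nat \<Rightarrow> real) \<Rightarrow> real" where
  "frob_norm n d X = sqrt (\<Sum>i<n. \<Sum>j<d. (X i j)^2)"

definition spec_norm :: "nat \<Rightarrow> nat \<Rightarrow> (nat \<Rightarrow> nat \<Rightarrow> real) \<Rightarrow> real" where
  "spec_norm n d X = Sup ((\<lambda>x. sqrt (\<Sum>i<n. (\<Sum>j<d. X i j * x j)^2)) ` {x. (\<Sum>j<d. (x j)^2) = 1})"

definition srank :: "nat \<Rightarrow> nat \<Rightarrow> (nat \<Rightarrow> nat \<Rightarrow> real) \<Rightarrow> real" where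
  "srank n d X = (frob_norm n d X)^2 / (spec_norm n d X)^2"

text \<open>RoPE frequency of block k, 0-indexed (k = 0 .. d/2-1); paper's theta_{k+1}.\<close>
definition rope_freq :: "real \<Rightarrow> nat \<Rightarrow> nat \<Rightarrow> real" where
  "rope_freq \<theta> d k = \<theta> powr (- (2 * real k) / real d)"

text \<open>RoPE action: row i (0-indexed) is at position j = i+1; column 2k, 2k+1 (0-indexed)
  form the k-th rotation block.\<close>
definition rope :: "real \<Rightarrow> nat \<Rightarrow> (nat \<Rightarrow> nat \<Rightarrow> real) \<Rightarrow> (nat \<Rightarrow> nat \<Rightarrow> real)" where
  "rope \<theta> d X = (\<lambda>i c.
     let k = c div 2; a = real (Suc i) * rope_freq \<theta> d k in
     if even c then cos a * X i c - sin a * X i (c + 1)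
     else sin a * X i (c - 1) + cos a * X i c)"

end

theory Submission
  imports Defs "HOL-Analysis.Analysis" "HOL-Library.Landau_Symbols"
begin

definition Gs :: "(nat \<Rightarrow> real) \<Rightarrow> nat \<Rightarrow> real \<Rightarrow> complex" where
  "Gs u n \<omega> = (\<Sum>i<n. complex_of_real ((u (Suc i))^2) * cis (real (Suc i) * \<omega>))"

lemma geo_bound:
  assumes "cis \<omega> \<noteq> 1"
  shows "cmod (\<Sum>j<m. cis (real (Suc j) * \<omega>)) \<le> 2 / cmod (1 - cis \<omega>)"
proof -
  let ?z = "cis \<omega>"
  have e: "(\<Sum>j<m. cis (real (Suc j) * \<omega>)) = ?z * (\<Sum>j<m. ?z ^ j)"
    by (simp add: sum_distrib_left Complex.DeMoivre cis_mult algebra_simps)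
  also have "\<dots> = ?z * ((1 - ?z ^ m) / (1 - ?z))" using assms by (simp add: sum_gp_strict)
  finally have e2: "(\<Sum>j<m. cis (real (Suc j) * \<omega>)) = ?z * ((1 - ?z ^ m) / (1 - ?z))" .
  have "cmod (1 - ?z ^ m) \<le> 2"
  proof -
    have "cmod (1 - ?z ^ m) \<le> cmod 1 + cmod (?z ^ m)" by (rule norm_triangle_ineq4)
    also have "\<dots> = 2" by (simp add: norm_power)
    finally show ?thesis .
  qed
  moreover have "cmod (1 - ?z) > 0" using assms by simp
  ultimately show ?thesis unfolding e2
    by (simp add: norm_mult norm_divide divide_right_mono)
qed

lemma abel:
  fixes a :: "nat \<Rightarrow> real" and b :: "nat \<Rightarrow> complex"
  shows "(\<Sum>i<n. of_real (a (Suc i)) * b (Suc i)) =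
     of_real (a n) * (\<Sum>j<n. b (Suc j)) - (\<Sum>j<n. of_real (a (Suc j) - a j) * (\<Sum>i<j. b (Suc i)))"
proof (induction n)
  case 0 then show ?case by simp
next
  case (Suc n)
  then show ?case by (simp add: ring_distribs)
qed

lemma sum_from1:
  fixes f :: "nat \<Rightarrow> real"
  assumes "f 0 = 0"
  shows "(\<Sum>j<n. f j) = (\<Sum>j=1..n-1. f j)"
proof (induction n)
  case 0 then show ?case by simp
next
  case (Suc n)
  show ?case
  proof (cases n)
    case 0 then show ?thesis using assms by simp
  next
    case (Suc m)
    then show ?thesis using Suc.IH by simp
  qed
qed

lemma G_small:
  fixes u :: "nat \<Rightarrow> real"
  assumes "cis \<omega> \<noteq> 1" and "\<forall>j\<ge>1. \<bar>u j\<bar> \<le> C"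
    and D: "(\<lambda>n. (\<Sum>j=1..n-1. \<bar>(u (j+1))^2 - (u j)^2\<bar>) / real n) \<longlonglongrightarrow> 0"
  shows "(\<lambda>n. cmod (Gs u n \<omega>) / real n) \<longlonglongrightarrow> 0"
proof -
  define K where "K = 2 / cmod (1 - cis \<omega>)"
  define a where "a j = (u (max j 1))^2" for j
  define b where "b j = cis (real j * \<omega>)" for j
  define Dn where "Dn n = (\<Sum>j=1..n-1. \<bar>(u (j+1))^2 - (u j)^2\<bar>)" for n
  have K0: "K \<ge> 0" unfolding K_def by simp
  have B: "cmod (\<Sum>i<j. b (Suc i)) \<le> K" for j
    unfolding K_def b_def using geo_bound[OF assms(1)] by simp
  have aC: "\<bar>a j\<bar> \<le> C^2" for j
  proof -
    have "\<bar>u (max j 1)\<bar> \<le> C" using assms(2) by simp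
    then have "\<bar>u (max j 1)\<bar>^2 \<le> C^2" by (intro power_mono) auto
    then show ?thesis unfolding a_def by simp
  qed
  have G: "Gs u n \<omega> = (\<Sum>i<n. of_real (a (Suc i)) * b (Suc i))" for n
    unfolding Gs_def a_def b_def by simp
  have bound: "cmod (Gs u n \<omega>) \<le> C^2 * K + K * Dn n" for n
  proof -
    have "cmod (Gs u n \<omega>) \<le> cmod (of_real (a n) * (\<Sum>j<n. b (Suc j)))
        + cmod (\<Sum>j<n. of_real (a (Suc j) - a j) * (\<Sum>i<j. b (Suc i)))"
      unfolding G abel by (rule norm_triangle_ineq4)
    also have "cmod (of_real (a n) * (\<Sum>j<n. b (Suc j))) \<le> C^2 * K"
      unfolding norm_mult using aC[of n] B[of n] K0
      by (simp add: mult_mono')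
    also have "cmod (\<Sum>j<n. of_real (a (Suc j) - a j) * (\<Sum>i<j. b (Suc i)))
        \<le> (\<Sum>j<n. \<bar>a (Suc j) - a j\<bar> * K)"
      by (rule order.trans[OF norm_sum sum_mono])
         (simp add: norm_mult mult_left_mono B del: of_real_diff)
    also have "(\<Sum>j<n. \<bar>a (Suc j) - a j\<bar> * K) = K * Dn n"
    proof -
      have "(\<Sum>j<n. \<bar>a (Suc j) - a j\<bar>) = (\<Sum>j=1..n-1. \<bar>a (Suc j) - a j\<bar>)"
        by (rule sum_from1) (simp add: a_def)
      also have "\<dots> = Dn n" unfolding Dn_def a_def
        by (rule sum.cong) (auto simp: max_def)
      finally show ?thesis by (simp add: sum_distrib_left[symmetric] mult.commute)
    qed
    finally show ?thesis by simp
  qed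
  have lim: "(\<lambda>n. C^2 * K * (1 / real n) + K * (Dn n / real n)) \<longlonglongrightarrow> 0"
  proof -
    have "(\<lambda>n. C^2 * K * (1 / real n) + K * (Dn n / real n)) \<longlonglongrightarrow> C^2 * K * 0 + K * 0"
      by (intro tendsto_intros lim_1_over_n D[folded Dn_def])
    then show ?thesis by simp
  qed
  show ?thesis
  proof (rule Lim_null_comparison[OF _ lim])
    show "\<forall>\<^sub>F n in sequentially. norm (cmod (Gs u n \<omega>) / real n) \<le> C^2 * K * (1 / real n) + K * (Dn n / real n)"
    proof (rule eventually_sequentiallyI[of 1])
      fix n :: nat assume "n \<ge> 1"
      then have "real n > 0" by simp
      then show "norm (cmod (Gs u n \<omega>) / real n) \<le> C^2 * K * (1 / real n) + K * (Dn n / real n)"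
        using bound[of n] by (simp add: field_simps)
    qed
  qed
qed

lemma pair_sum:
  fixes f :: "nat \<Rightarrow> 'a::comm_monoid_add"
  shows "(\<Sum>c<2*m. f c) = (\<Sum>k<m. f (2*k) + f (2*k+1))"
  by (induction m) (simp_all add: add.assoc)

lemma re_sq_basic: "(Re s)^2 = Re (s * cnj s + s * s) / 2"
  by (simp add: power2_eq_square algebra_simps)

lemma cis_diff: "cis (a - b) = cis a * cis (- b)"
  by (simp add: cis_mult)

lemma cis_add: "cis (a + b) = cis a * cis b"
  by (simp add: cis_mult)

lemma re_sq:
  fixes w :: "nat \<Rightarrow> complex" and \<phi> :: "nat \<Rightarrow> real"
  shows "(Re (\<Sum>k\<in>A. cis (\<phi> k) * w k))^2 =
    Re (\<Sum>k\<in>A. \<Sum>l\<in>A. cis (\<phi> k - \<phi> l) * w k * cnj (w l) + cis (\<phi> k + \<phi> l) * w k * w l) / 2"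
proof -
  let ?s = "\<Sum>k\<in>A. cis (\<phi> k) * w k"
  have 1: "?s * cnj ?s = (\<Sum>k\<in>A. \<Sum>l\<in>A. cis (\<phi> k - \<phi> l) * w k * cnj (w l))"
    unfolding cnj_sum sum_product
    by (intro sum.cong refl) (simp add: cis_cnj cis_diff mult_ac)
  have 2: "?s * ?s = (\<Sum>k\<in>A. \<Sum>l\<in>A. cis (\<phi> k + \<phi> l) * w k * w l)"
    unfolding sum_product
    by (intro sum.cong refl) (simp add: cis_add mult_ac)
  show ?thesis unfolding re_sq_basic[of ?s] 1 2 by (simp add: sum.distrib)
qed

definition wv :: "(nat \<Rightarrow> real) \<Rightarrow> (nat \<Rightarrow> real) \<Rightarrow> nat \<Rightarrow> complex" where
  "wv v x k = Complex (v (2*k)) (v (2*k+1)) * cnj (Complex (x (2*k)) (x (2*k+1)))"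

lemma rowdot:
  assumes "d = 2*K"
  shows "(\<Sum>c<d. rope \<theta> d (\<lambda>i j. u (Suc i) * v j) i c * x c) =
     u (Suc i) * Re (\<Sum>k<K. cis (real (Suc i) * rope_freq \<theta> d k) * wv v x k)"
proof -
  have "(\<Sum>c<d. rope \<theta> d (\<lambda>i j. u (Suc i) * v j) i c * x c) =
     (\<Sum>k<K. rope \<theta> d (\<lambda>i j. u (Suc i) * v j) i (2*k) * x (2*k)
          + rope \<theta> d (\<lambda>i j. u (Suc i) * v j) i (2*k+1) * x (2*k+1))"
    unfolding assms by (rule pair_sum)
  also have "\<dots> = (\<Sum>k<K. u (Suc i) * Re (cis (real (Suc i) * rope_freq \<theta> d k) * wv v x k))"
  proof (intro sum.cong refl)
    fix k
    have e1: "(2*k) div 2 = (k::nat)" "(2*k+1) div 2 = k" "even (2*k)" "\<not> even (2*k+1)" "2*k+1-1 = 2*k" by auto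
    show "rope \<theta> d (\<lambda>i j. u (Suc i) * v j) i (2*k) * x (2*k)
          + rope \<theta> d (\<lambda>i j. u (Suc i) * v j) i (2*k+1) * x (2*k+1) =
          u (Suc i) * Re (cis (real (Suc i) * rope_freq \<theta> d k) * wv v x k)"
      unfolding rope_def Let_def e1 if_True if_False wv_def
      by (simp add: algebra_simps)
  qed
  finally show ?thesis by (simp add: Re_sum sum_distrib_left)
qed

lemma Gs0: "Gs u n 0 = of_real (\<Sum>i<n. (u (Suc i))^2)"
  by (simp add: Gs_def)

lemma Qformula:
  assumes "d = 2*K"
  shows "(\<Sum>i<n. (\<Sum>c<d. rope \<theta> d (\<lambda>i j. u (Suc i) * v j) i c * x c)^2) =
    Re (\<Sum>k<K. \<Sum>l<K. Gs u n (rope_freq \<theta> d k - rope_freq \<theta> d l) * wv v x k * cnj (wv v x l)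
         + Gs u n (rope_freq \<theta> d k + rope_freq \<theta> d l) * wv v x k * wv v x l) / 2"
proof -
  let ?f = "rope_freq \<theta> d"
  let ?w = "wv v x"
  have "(\<Sum>i<n. (\<Sum>c<d. rope \<theta> d (\<lambda>i j. u (Suc i) * v j) i c * x c)^2) =
     (\<Sum>i<n. (u (Suc i))^2 * (Re (\<Sum>k<K. cis (real (Suc i) * ?f k) * ?w k))^2)"
    unfolding rowdot[OF assms] by (simp add: power_mult_distrib)
  also have "\<dots> = (\<Sum>i<n. (u (Suc i))^2 * Re (\<Sum>k<K. \<Sum>l<K.
       cis (real (Suc i) * ?f k - real (Suc i) * ?f l) * ?w k * cnj (?w l)
       + cis (real (Suc i) * ?f k + real (Suc i) * ?f l) * ?w k * ?w l) / 2)"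
    by (simp only: re_sq times_divide_eq_right)
  also have "\<dots> = Re (\<Sum>i<n. of_real ((u (Suc i))^2) * (\<Sum>k<K. \<Sum>l<K. 
       cis (real (Suc i) * (?f k - ?f l)) * ?w k * cnj (?w l)
       + cis (real (Suc i) * (?f k + ?f l)) * ?w k * ?w l)) / 2"
    by (simp add: Re_sum sum_divide_distrib right_diff_distrib distrib_left)
  also have "(\<Sum>i<n. of_real ((u (Suc i))^2) * (\<Sum>k<K. \<Sum>l<K. 
       cis (real (Suc i) * (?f k - ?f l)) * ?w k * cnj (?w l)
       + cis (real (Suc i) * (?f k + ?f l)) * ?w k * ?w l)) =
     (\<Sum>k<K. \<Sum>l<K. \<Sum>i<n. of_real ((u (Suc i))^2) * (
       cis (real (Suc i) * (?f k - ?f l)) * ?w k * cnj (?w l)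
       + cis (real (Suc i) * (?f k + ?f l)) * ?w k * ?w l))"
    unfolding sum_distrib_left
    by (subst sum.swap, rule sum.cong, rule refl, rule sum.swap)
  also have "\<dots> = (\<Sum>k<K. \<Sum>l<K. Gs u n (?f k - ?f l) * ?w k * cnj (?w l)
         + Gs u n (?f k + ?f l) * ?w k * ?w l)"
    unfolding Gs_def distrib_left sum.distrib sum_distrib_right
    by (simp add: mult.assoc)
  finally show ?thesis .
qed

lemma decomp:
  fixes G :: "real \<Rightarrow> complex" and f :: "nat \<Rightarrow> real" and w :: "nat \<Rightarrow> complex"
  assumes G0: "G 0 = of_real S" and w1: "\<forall>k<K. cmod (w k) \<le> 1"
  shows "\<bar>Re (\<Sum>k<K. \<Sum>l<K. G (f k - f l) * w k * cnj (w l) + G (f k + f l) * w k * w l) / 2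
          - S / 2 * (\<Sum>k<K. (cmod (w k))^2)\<bar>
       \<le> (\<Sum>k<K. \<Sum>l<K. cmod (if k = l then 0 else G (f k - f l)) + cmod (G (f k + f l))) / 2"
proof -
  define H where "H k l = (if k = l then 0 else G (f k - f l))" for k l
  define R where "R = (\<Sum>k<K. \<Sum>l<K. H k l * w k * cnj (w l) + G (f k + f l) * w k * w l)"
  have row: "(\<Sum>l<K. G (f k - f l) * w k * cnj (w l) + G (f k + f l) * w k * w l) =
      (\<Sum>l<K. H k l * w k * cnj (w l) + G (f k + f l) * w k * w l) + of_real (S * (cmod (w k))^2)"
    if "k < K" for k
  proof -
    have "G (f k - f l) = H k l + (if l = k then of_real S else 0)" for l
      using G0 by (simp add: H_def)
    then have "(\<Sum>l<K. G (f k - f l) * w k * cnj (w l) + G (f k + f l) * w k * w l) =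
       (\<Sum>l<K. (H k l * w k * cnj (w l) + G (f k + f l) * w k * w l)
              + (if l = k then of_real S * w k * cnj (w k) else 0))"
      by (intro sum.cong refl) (simp add: algebra_simps)
    also have "\<dots> = (\<Sum>l<K. H k l * w k * cnj (w l) + G (f k + f l) * w k * w l) + of_real S * w k * cnj (w k)"
      using that by (simp add: sum.distrib)
    also have "of_real S * w k * cnj (w k) = of_real (S * (cmod (w k))^2)"
      by (simp only: mult.assoc complex_norm_square of_real_mult)
    finally show ?thesis .
  qed
  have tot: "(\<Sum>k<K. \<Sum>l<K. G (f k - f l) * w k * cnj (w l) + G (f k + f l) * w k * w l) =
      R + of_real (S * (\<Sum>k<K. (cmod (w k))^2))"
  proof -
    have "(\<Sum>k<K. \<Sum>l<K. G (f k - f l) * w k * cnj (w l) + G (f k + f l) * w k * w l) =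
       (\<Sum>k<K. (\<Sum>l<K. H k l * w k * cnj (w l) + G (f k + f l) * w k * w l) + of_real (S * (cmod (w k))^2))"
      by (rule sum.cong) (simp_all add: row)
    also have "\<dots> = R + of_real (S * (\<Sum>k<K. (cmod (w k))^2))"
      unfolding R_def sum.distrib sum_distrib_left of_real_sum by simp
    finally show ?thesis .
  qed
  have "\<bar>Re R\<bar> \<le> cmod R" by (rule abs_Re_le_cmod)
  also have "cmod R \<le> (\<Sum>k<K. \<Sum>l<K. cmod (H k l * w k * cnj (w l) + G (f k + f l) * w k * w l))"
    unfolding R_def by (rule order.trans[OF norm_sum sum_mono]) (rule norm_sum)
  also have "\<dots> \<le> (\<Sum>k<K. \<Sum>l<K. cmod (H k l) + cmod (G (f k + f l)))"
  proof (intro sum_mono)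
    fix k l assume k: "k \<in> {..<K}" and l: "l \<in> {..<K}"
    have wk: "cmod (w k) \<le> 1" and wl: "cmod (w l) \<le> 1" using w1 k l by auto
    have "cmod (H k l * w k * cnj (w l)) \<le> cmod (H k l)"
    proof -
      have "cmod (w k) * cmod (w l) \<le> 1" using wk wl by (simp add: mult_le_one)
      then have "cmod (H k l) * (cmod (w k) * cmod (w l)) \<le> cmod (H k l) * 1"
        by (intro mult_left_mono) auto
      then show ?thesis by (simp add: norm_mult mult.assoc)
    qed
    moreover have "cmod (G (f k + f l) * w k * w l) \<le> cmod (G (f k + f l))"
    proof -
      have "cmod (w k) * cmod (w l) \<le> 1" using wk wl by (simp add: mult_le_one)
      then have "cmod (G (f k + f l)) * (cmod (w k) * cmod (w l)) \<le> cmod (G (f k + f l)) * 1"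
        by (intro mult_left_mono) auto
      then show ?thesis by (simp add: norm_mult mult.assoc)
    qed
    ultimately show "cmod (H k l * w k * cnj (w l) + G (f k + f l) * w k * w l) \<le> cmod (H k l) + cmod (G (f k + f l))"
      by (meson add_mono norm_triangle_ineq order_trans)
  qed
  finally have b: "\<bar>Re R\<bar> \<le> (\<Sum>k<K. \<Sum>l<K. cmod (H k l) + cmod (G (f k + f l)))" .
  have eq: "Re (R + of_real (S * (\<Sum>k<K. (cmod (w k))^2))) / 2 - S / 2 * (\<Sum>k<K. (cmod (w k))^2) = Re R / 2"
    by (simp add: field_simps)
  show ?thesis unfolding tot eq using b by (simp add: H_def)
qed

lemma wv_norm2: "(cmod (wv v x k))^2 = (v(2*k)^2 + v(2*k+1)^2) * (x(2*k)^2 + x(2*k+1)^2)"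
  by (simp add: wv_def norm_mult power_mult_distrib complex_norm)

lemma sup_bounds:
  fixes g :: "'a \<Rightarrow> real"
  assumes "x0 \<in> U" and "\<And>x. x \<in> U \<Longrightarrow> 0 \<le> g x \<and> g x \<le> B"
  shows "g x0 \<le> (Sup ((\<lambda>x. sqrt (g x)) ` U))^2 \<and> (Sup ((\<lambda>x. sqrt (g x)) ` U))^2 \<le> B"
proof -
  let ?T = "(\<lambda>x. sqrt (g x)) ` U"
  have ub: "\<And>y. y \<in> ?T \<Longrightarrow> y \<le> sqrt B" using assms(2) by auto
  have bdd: "bdd_above ?T" by (rule bdd_aboveI[where M="sqrt B"]) (rule ub)
  have l: "sqrt (g x0) \<le> Sup ?T" using assms(1) bdd by (auto intro: cSup_upper)
  have u: "Sup ?T \<le> sqrt B" using assms(1) ub by (intro cSup_least) auto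
  have g0: "0 \<le> g x0" and gB: "g x0 \<le> B" using assms by auto
  have "g x0 = (sqrt (g x0))^2" using g0 by simp
  also have "\<dots> \<le> (Sup ?T)^2" using l g0 by (intro power_mono) auto
  finally have 1: "g x0 \<le> (Sup ?T)^2" .
  have "(Sup ?T)^2 \<le> (sqrt B)^2" using l u g0 by (intro power_mono) (auto intro: order_trans[OF real_sqrt_ge_zero])
  also have "\<dots> = B" using g0 gB by simp
  finally show ?thesis using 1 by simp
qed

lemma rot_sq_gen: "((a::real) * p - b * q)^2 + (b * p + a * q)^2 = (b^2 + a^2) * (p^2 + q^2)"
  by (simp add: power2_eq_square algebra_simps)

lemma rot_sq: "(cos (t::real) * (p::real) - sin t * q)^2 + (sin t * p + cos t * q)^2 = p^2 + q^2"
proof -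
  have "(cos t * p - sin t * q)^2 + (sin t * p + cos t * q)^2 = ((sin t)^2 + (cos t)^2) * (p^2 + q^2)"
    by (rule rot_sq_gen)
  then show ?thesis by simp
qed

lemma rope_row_sq:
  assumes "d = 2*K"
  shows "(\<Sum>c<d. (rope \<theta> d (\<lambda>i j. u (Suc i) * v j) i c)^2) = (u (Suc i))^2 * (\<Sum>c<d. (v c)^2)"
proof -
  have "(\<Sum>c<d. (rope \<theta> d (\<lambda>i j. u (Suc i) * v j) i c)^2) =
     (\<Sum>k<K. (rope \<theta> d (\<lambda>i j. u (Suc i) * v j) i (2*k))^2 + (rope \<theta> d (\<lambda>i j. u (Suc i) * v j) i (2*k+1))^2)"
    unfolding assms by (rule pair_sum)
  also have "\<dots> = (\<Sum>k<K. (u (Suc i))^2 * ((v (2*k))^2 + (v (2*k+1))^2))"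
  proof (intro sum.cong refl)
    fix k
    have e1: "(2*k) div 2 = (k::nat)" "(2*k+1) div 2 = k" "even (2*k)" "\<not> even (2*k+1)" "2*k+1-1 = 2*k" by auto
    show "(rope \<theta> d (\<lambda>i j. u (Suc i) * v j) i (2*k))^2 + (rope \<theta> d (\<lambda>i j. u (Suc i) * v j) i (2*k+1))^2
        = (u (Suc i))^2 * ((v (2*k))^2 + (v (2*k+1))^2)"
      unfolding rope_def Let_def e1 if_True if_False
      using rot_sq[of "real (Suc i) * rope_freq \<theta> d k" "u (Suc i) * v (2*k)" "u (Suc i) * v (2*k+1)"]
      by (simp add: power_mult_distrib algebra_simps)
  qed
  also have "\<dots> = (u (Suc i))^2 * (\<Sum>c<d. (v c)^2)"
    unfolding assms pair_sum[of "\<lambda>c. (v c)^2"] by (simp add: sum_distrib_left)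
  finally show ?thesis .
qed

lemma dot_le1:
  fixes v x :: "nat \<Rightarrow> real"
  assumes "(\<Sum>j<d. (v j)^2) = 1" "(\<Sum>j<d. (x j)^2) = 1"
  shows "(\<Sum>j<d. v j * x j)^2 \<le> 1"
proof -
  have a: "0 \<le> (\<Sum>j<d. (v j - x j)^2)" by (intro sum_nonneg) auto
  have b: "0 \<le> (\<Sum>j<d. (v j + x j)^2)" by (intro sum_nonneg) auto
  have a': "(\<Sum>j<d. (v j - x j)^2) = 2 - 2 * (\<Sum>j<d. v j * x j)"
    using assms by (simp add: power2_diff sum.distrib sum_subtractf sum_distrib_left mult.assoc)
  have b': "(\<Sum>j<d. (v j + x j)^2) = 2 + 2 * (\<Sum>j<d. v j * x j)"
    using assms by (simp add: power2_sum sum.distrib sum_distrib_left mult.assoc)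
  have "\<bar>\<Sum>j<d. v j * x j\<bar> \<le> 1" using a b a' b' by linarith
  then show ?thesis by (simp add: abs_square_le_1)
qed

theorem theorem1:
  fixes d :: nat and \<theta> :: real and u :: "nat \<Rightarrow> real" and v :: "nat \<Rightarrow> real"
    and c C :: real
  assumes "d \<ge> 2" and "even d" and "\<theta> > 1"
    and "(\<Sum>j<d. (v j)^2) = 1"
    and "0 < c" and "c \<le> C" and "\<forall>j\<ge>1. c \<le> \<bar>u j\<bar> \<and> \<bar>u j\<bar> \<le> C"
    and "(\<lambda>n. \<Sum>j=1..n-1. \<bar>(u (j+1))^2 - (u j)^2\<bar>) \<in> o(\<lambda>n. real n)"
    and "\<forall>k<d div 2. exp (\<i> * complex_of_real (2 * rope_freq \<theta> d k)) \<noteq> 1"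
    and "\<forall>k<d div 2. \<forall>l<d div 2. k \<noteq> l \<longrightarrow>
            exp (\<i> * complex_of_real (rope_freq \<theta> d k + rope_freq \<theta> d l)) \<noteq> 1 \<and>
            exp (\<i> * complex_of_real (rope_freq \<theta> d k - rope_freq \<theta> d l)) \<noteq> 1"
  shows "((\<lambda>n. srank n d (rope \<theta> d (\<lambda>i j. u (Suc i) * v j))
                / srank n d (\<lambda>i j. u (Suc i) * v j))
          \<longlongrightarrow> 2 / (MAX k\<in>{..<d div 2}. (sqrt ((v (2*k))^2 + (v (2*k+1))^2))^2)) sequentially
       \<and> 2 / (MAX k\<in>{..<d div 2}. (sqrt ((v (2*k))^2 + (v (2*k+1))^2))^2) \<in> {2..real d}"
proof -
  obtain K where dK: "d = 2*K" using \<open>even d\<close> by blast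
  have K1: "K \<ge> 1" using \<open>d \<ge> 2\<close> dK by simp
  have dK2: "d div 2 = K" using dK by simp
  define f where "f = rope_freq \<theta> d"
  define \<alpha>2 where "\<alpha>2 k = (v (2*k))^2 + (v (2*k+1))^2" for k
  define X where "X = (\<lambda>i j. u (Suc i) * v j)"
  define RX where "RX = rope \<theta> d X"
  define S where "S n = (\<Sum>i<n. (u (Suc i))^2)" for n
  define E where "E n = (\<Sum>k<K. \<Sum>l<K. cmod (if k = l then 0 else Gs u n (f k - f l))
                     + cmod (Gs u n (f k + f l))) / 2" for n
  define M where "M = Max (\<alpha>2 ` {..<K})"
  define U where "U = {x::nat\<Rightarrow>real. (\<Sum>j<d. (x j)^2) = 1}"
  define Q where "Q n x = (\<Sum>i<n. (\<Sum>c<d. RX i c * x c)^2)" for n x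
  have \<alpha>0: "\<alpha>2 k \<ge> 0" for k unfolding \<alpha>2_def by simp
  have sum\<alpha>: "(\<Sum>k<K. \<alpha>2 k) = 1"
    using assms(4) pair_sum[of "\<lambda>j. (v j)^2" K] unfolding dK \<alpha>2_def by simp
  have Mgoal: "(MAX k\<in>{..<d div 2}. (sqrt ((v (2*k))^2 + (v (2*k+1))^2))^2) = M"
  proof -
    have "(\<lambda>k. (sqrt (\<alpha>2 k))^2) ` {..<K} = \<alpha>2 ` {..<K}" using \<alpha>0 by (intro image_cong) auto
    then show ?thesis unfolding M_def dK2 \<alpha>2_def[symmetric] by simp
  qed
  have finK: "finite {..<K}" by simp
  have "0 \<in> {..<K}" using K1 by simp
  then have neK: "{..<K} \<noteq> {}" by blast
  have "M \<in> \<alpha>2 ` {..<K}" unfolding M_def using finK neK by (intro Max_in) auto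
  then obtain k0 where k0: "k0 < K" "\<alpha>2 k0 = M" by auto
  have Mge: "\<alpha>2 k \<le> M" if "k < K" for k
    unfolding M_def using finK that by (intro Max_ge) auto
  have M1: "M \<le> 1"
  proof -
    have "\<alpha>2 k0 \<le> (\<Sum>k<K. \<alpha>2 k)" using k0 \<alpha>0 by (intro member_le_sum) auto
    then show ?thesis using k0 sum\<alpha> by simp
  qed
  have MK: "1 \<le> real K * M"
  proof -
    have "(\<Sum>k<K. \<alpha>2 k) \<le> (\<Sum>k<K. M)" using Mge by (intro sum_mono) auto
    then show ?thesis using sum\<alpha> by simp
  qed
  have Mpos: "M > 0"
  proof (rule ccontr)
    assume "\<not> M > 0"
    then have "real K * M \<le> 0" by (intro mult_nonneg_nonpos) auto
    then show False using MK by linarith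
  qed
  have part2: "2 / M \<in> {2..real d}"
  proof -
    have "2 \<le> 2 / M" using M1 Mpos by (simp add: le_divide_eq)
    moreover have "2 / M \<le> real d" using MK Mpos dK by (simp add: divide_le_eq)
    ultimately show ?thesis by simp
  qed
  have Qf: "Q n x = Re (\<Sum>k<K. \<Sum>l<K. Gs u n (f k - f l) * wv v x k * cnj (wv v x l)
         + Gs u n (f k + f l) * wv v x k * wv v x l) / 2" for n x
    unfolding Q_def RX_def X_def f_def by (rule Qformula[OF dK])
  have \<beta>sum: "(\<Sum>k<K. (x (2*k))^2 + (x (2*k+1))^2) = 1" if "x \<in> U" for x
    using that pair_sum[of "\<lambda>j. (x j)^2" K] unfolding U_def dK by simp
  have wv1: "cmod (wv v x k) \<le> 1" if "x \<in> U" "k < K" for x k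
  proof -
    have b: "(x (2*k))^2 + (x (2*k+1))^2 \<le> 1"
    proof -
      have "(x (2*k))^2 + (x (2*k+1))^2 \<le> (\<Sum>k<K. (x (2*k))^2 + (x (2*k+1))^2)"
        using that(2) by (intro member_le_sum) auto
      then show ?thesis using \<beta>sum[OF that(1)] by simp
    qed
    have a: "\<alpha>2 k \<le> 1" using Mge[OF that(2)] M1 by simp
    have "(cmod (wv v x k))^2 \<le> 1" unfolding wv_norm2 \<alpha>2_def[symmetric]
      using a b \<alpha>0 by (simp add: mult_le_one)
    then show ?thesis by (simp add: power_le_one_iff abs_square_le_1)
  qed
  have Abound: "(\<Sum>k<K. (cmod (wv v x k))^2) \<le> M" if "x \<in> U" for x
  proof -
    have "(\<Sum>k<K. (cmod (wv v x k))^2) = (\<Sum>k<K. \<alpha>2 k * ((x (2*k))^2 + (x (2*k+1))^2))"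
      unfolding wv_norm2 \<alpha>2_def by simp
    also have "\<dots> \<le> (\<Sum>k<K. M * ((x (2*k))^2 + (x (2*k+1))^2))"
      using Mge by (intro sum_mono mult_right_mono) auto
    also have "\<dots> = M" using \<beta>sum[OF that] by (simp add: sum_distrib_left[symmetric])
    finally show ?thesis .
  qed
  have S0: "S n \<ge> 0" for n unfolding S_def by (intro sum_nonneg) auto
  have err: "\<bar>Q n x - S n / 2 * (\<Sum>k<K. (cmod (wv v x k))^2)\<bar> \<le> E n" if "x \<in> U" for n x
    unfolding Qf E_def using wv1[OF that] by (intro decomp) (auto simp: Gs0 S_def)
  have Qnn: "Q n x \<ge> 0" for n x unfolding Q_def by (intro sum_nonneg) auto
  define x0 where "x0 j = (if j = 2*k0 then v (2*k0) / sqrt M else if j = 2*k0+1 then v (2*k0+1) / sqrt M else 0)" for j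
  have x0b: "(x0 (2*k))^2 + (x0 (2*k+1))^2 = (if k = k0 then 1 else 0)" for k
  proof (cases "k = k0")
    case True
    then show ?thesis using k0(2) Mpos unfolding x0_def \<alpha>2_def
      by (simp add: power_divide add_divide_distrib[symmetric])
  next
    case False
    then have "2*k \<noteq> 2*k0" "2*k \<noteq> 2*k0+1" "2*k+1 \<noteq> 2*k0" "2*k+1 \<noteq> 2*k0+1" by presburger+
    then show ?thesis using False unfolding x0_def by simp
  qed
  have x0U: "x0 \<in> U"
    unfolding U_def dK using pair_sum[of "\<lambda>j. (x0 j)^2" K] x0b k0(1) by simp
  have Ax0: "(\<Sum>k<K. (cmod (wv v x0 k))^2) = M"
  proof -
    have "(\<Sum>k<K. (cmod (wv v x0 k))^2) = (\<Sum>k<K. \<alpha>2 k * (if k = k0 then 1 else 0))"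
      unfolding wv_norm2 \<alpha>2_def x0b by simp
    also have "\<dots> = (\<Sum>k<K. if k = k0 then \<alpha>2 k else 0)" by (intro sum.cong) auto
    also have "\<dots> = M" using k0 by simp
    finally show ?thesis .
  qed
  have specRX: "S n * M / 2 - E n \<le> (spec_norm n d RX)^2 \<and> (spec_norm n d RX)^2 \<le> S n * M / 2 + E n" for n
  proof -
    have sp: "spec_norm n d RX = Sup ((\<lambda>x. sqrt (Q n x)) ` U)"
      unfolding spec_norm_def Q_def U_def by simp
    have "Q n x0 \<le> (spec_norm n d RX)^2 \<and> (spec_norm n d RX)^2 \<le> S n * M / 2 + E n"
      unfolding sp
    proof (rule sup_bounds[OF x0U])
      fix x assume x: "x \<in> U"
      have "Q n x \<le> S n / 2 * (\<Sum>k<K. (cmod (wv v x k))^2) + E n" using err[OF x, of n] by linarith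
      also have "\<dots> \<le> S n / 2 * M + E n" using Abound[OF x] S0[of n] by (intro add_mono mult_left_mono) auto
      finally show "0 \<le> Q n x \<and> Q n x \<le> S n * M / 2 + E n" using Qnn by simp
    qed
    moreover have "S n * M / 2 - E n \<le> Q n x0" using err[OF x0U, of n] unfolding Ax0 by simp
    ultimately show ?thesis by linarith
  qed
  have frobRX: "(frob_norm n d RX)^2 = S n" for n
  proof -
    have "(\<Sum>i<n. \<Sum>j<d. (RX i j)^2) = S n"
      unfolding RX_def X_def S_def rope_row_sq[OF dK] assms(4) by simp
    then show ?thesis unfolding frob_norm_def using S0[of n] by simp
  qed
  have frobX: "(frob_norm n d X)^2 = S n" for n
  proof -
    have "(\<Sum>i<n. \<Sum>j<d. (X i j)^2) = S n"
      unfolding X_def S_def by (simp add: power_mult_distrib sum_distrib_left[symmetric] assms(4))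
    then show ?thesis unfolding frob_norm_def using S0[of n] by simp
  qed
  have specX: "(spec_norm n d X)^2 = S n" for n
  proof -
    define g where "g x = (\<Sum>i<n. (\<Sum>j<d. X i j * x j)^2)" for x
    have g: "g x = S n * (\<Sum>j<d. v j * x j)^2" for x
      unfolding g_def X_def S_def
      by (simp add: mult.assoc sum_distrib_left[symmetric] power_mult_distrib sum_distrib_right)
    have vU: "v \<in> U" unfolding U_def using assms(4) by simp
    have "g v \<le> (Sup ((\<lambda>x. sqrt (g x)) ` U))^2 \<and> (Sup ((\<lambda>x. sqrt (g x)) ` U))^2 \<le> S n"
    proof (rule sup_bounds[OF vU])
      fix x assume "x \<in> U"
      then have "(\<Sum>j<d. v j * x j)^2 \<le> 1" using dot_le1[OF assms(4)] unfolding U_def by simp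
      then show "0 \<le> g x \<and> g x \<le> S n" unfolding g using S0[of n]
        by (simp add: mult_left_le)
    qed
    moreover have "g v = S n" unfolding g using assms(4) by (simp add: power2_eq_square)
    moreover have "spec_norm n d X = Sup ((\<lambda>x. sqrt (g x)) ` U)"
      unfolding spec_norm_def g_def U_def by simp
    ultimately show ?thesis by simp
  qed
  have Slow: "S n \<ge> c^2 * real n" for n
  proof -
    have "(\<Sum>i<n. c^2) \<le> S n" unfolding S_def
    proof (intro sum_mono)
      fix i
      have "c \<le> \<bar>u (Suc i)\<bar>" using assms(7) by simp
      then have "c^2 \<le> \<bar>u (Suc i)\<bar>^2" using assms(5) by (intro power_mono) auto
      then show "c^2 \<le> (u (Suc i))^2" by simp
    qed
    then show ?thesis by (simp add: mult.commute)
  qed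
  have Dlim: "(\<lambda>n. (\<Sum>j=1..n-1. \<bar>(u (j+1))^2 - (u j)^2\<bar>) / real n) \<longlonglongrightarrow> 0"
    using smalloD_tendsto[OF assms(8)] by simp
  have uC: "\<forall>j\<ge>1. \<bar>u j\<bar> \<le> C" using assms(7) by simp
  have Glim: "(\<lambda>n. cmod (Gs u n \<omega>) / real n) \<longlonglongrightarrow> 0"
    if "exp (\<i> * complex_of_real \<omega>) \<noteq> 1" for \<omega>
    using G_small[OF _ uC Dlim] that by (simp add: cis_conv_exp)
  have T1: "(\<lambda>n. cmod (if k = l then 0 else Gs u n (f k - f l)) / real n) \<longlonglongrightarrow> 0"
    if "k < K" "l < K" for k l
  proof (cases "k = l")
    case True then show ?thesis by simp
  next
    case False then show ?thesis
      using Glim assms(10) that unfolding dK2 f_def by simp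
  qed
  have T2: "(\<lambda>n. cmod (Gs u n (f k + f l)) / real n) \<longlonglongrightarrow> 0"
    if "k < K" "l < K" for k l
  proof (cases "k = l")
    case True
    then have "f k + f l = 2 * rope_freq \<theta> d k" unfolding f_def by simp
    then show ?thesis using Glim assms(9) that unfolding dK2 by simp
  next
    case False then show ?thesis
      using Glim assms(10) that unfolding dK2 f_def by simp
  qed
  have Elim: "(\<lambda>n. E n / real n) \<longlonglongrightarrow> 0"
  proof -
    have L: "(\<lambda>n. (\<Sum>k<K. \<Sum>l<K. cmod (if k = l then 0 else Gs u n (f k - f l)) / real n
            + cmod (Gs u n (f k + f l)) / real n) / 2) \<longlonglongrightarrow> (\<Sum>k<K. \<Sum>l<K. 0 + 0) / 2"
      by (intro tendsto_divide tendsto_sum tendsto_add T1 T2 tendsto_const) auto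
    have eq: "E n / real n = (\<Sum>k<K. \<Sum>l<K. cmod (if k = l then 0 else Gs u n (f k - f l)) / real n
            + cmod (Gs u n (f k + f l)) / real n) / 2" for n
      unfolding E_def by (simp add: sum_divide_distrib add_divide_distrib mult.commute)
    have fe: "(\<lambda>n. E n / real n) = (\<lambda>n. (\<Sum>k<K. \<Sum>l<K. cmod (if k = l then 0 else Gs u n (f k - f l)) / real n
            + cmod (Gs u n (f k + f l)) / real n) / 2)" by (rule ext) (rule eq)
    show ?thesis unfolding fe using L by simp
  qed
  have lim1: "(\<lambda>n. (spec_norm n d RX)^2 / S n) \<longlonglongrightarrow> M / 2"
  proof -
    have "(\<lambda>n. (spec_norm n d RX)^2 / S n - M / 2) \<longlonglongrightarrow> 0"
    proof (rule Lim_null_comparison)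
      have "(\<lambda>n. (1 / c^2) * (E n / real n)) \<longlonglongrightarrow> (1 / c^2) * 0"
        by (intro tendsto_mult tendsto_const Elim)
      then show "(\<lambda>n. (1 / c^2) * (E n / real n)) \<longlonglongrightarrow> 0" by simp
      show "\<forall>\<^sub>F n in sequentially. norm ((spec_norm n d RX)^2 / S n - M / 2) \<le> (1 / c^2) * (E n / real n)"
      proof (rule eventually_sequentiallyI[of 1])
        fix n :: nat assume n: "n \<ge> 1"
        have cn: "c^2 * real n > 0" using n assms(5) by simp
        have Sp: "S n > 0" using Slow[of n] cn by linarith
        have "\<bar>(spec_norm n d RX)^2 - S n * M / 2\<bar> \<le> E n" using specRX[of n] by linarith
        then have E0: "E n \<ge> 0" by linarith
        have "norm ((spec_norm n d RX)^2 / S n - M / 2) = \<bar>(spec_norm n d RX)^2 - S n * M / 2\<bar> / S n"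
          using Sp by (simp add: field_simps)
        also have "\<dots> \<le> E n / S n" using \<open>\<bar>_\<bar> \<le> E n\<close> Sp by (simp add: divide_right_mono)
        also have "\<dots> \<le> E n / (c^2 * real n)" using E0 cn Slow[of n] by (intro divide_left_mono) auto
        also have "\<dots> = (1 / c^2) * (E n / real n)" by simp
        finally show "norm ((spec_norm n d RX)^2 / S n - M / 2) \<le> (1 / c^2) * (E n / real n)" .
      qed
    qed
    then show ?thesis by (rule LIM_zero_cancel)
  qed
  have lim2: "(\<lambda>n. inverse ((spec_norm n d RX)^2 / S n)) \<longlonglongrightarrow> inverse (M / 2)"
    using lim1 Mpos by (intro tendsto_inverse) auto
  have lim3: "(\<lambda>n. srank n d RX / srank n d X) \<longlonglongrightarrow> 2 / M"
  proof -
    have "\<forall>\<^sub>F n in sequentially. inverse ((spec_norm n d RX)^2 / S n) = srank n d RX / srank n d X"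
    proof (rule eventually_sequentiallyI[of 1])
      fix n :: nat assume n: "n \<ge> 1"
      have cn: "c^2 * real n > 0" using n assms(5) by simp
      have Sp: "S n > 0" using Slow[of n] cn by linarith
      show "inverse ((spec_norm n d RX)^2 / S n) = srank n d RX / srank n d X"
        unfolding srank_def frobRX frobX specX using Sp by (simp add: inverse_divide)
    qed
    with lim2 have "(\<lambda>n. srank n d RX / srank n d X) \<longlonglongrightarrow> inverse (M / 2)"
      by (rule Lim_transform_eventually)
    then show ?thesis by simp
  qed
  show ?thesis using lim3 part2 unfolding Mgoal RX_def X_def by simp
qed

end
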